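(* Let $\mathcal{G}$ be a network of type $\mathcal{C}^1$ with exactly two stubborn agents $s_1,s_2$, neither having a self-loop ($w_{s_1s_1}=w_{s_2s_2}=0$), whose opinions evolve by the Friedkin–Johnsen model $\mathbf{x}(k+1)=(I-\beta)W\mathbf{x}(k)+\beta\mathbf{x}(0)$, and suppose $\beta_{s_2}\ge 1/2$. Then for either stubborn agent $s_i$ ($i\in\{1,2\}$) there always exists an edge modification $(a,b,d)$ which increases the influence centrality $c_{s_i}$.
   Context: Let $\mathcal{G}=(\mathcal{V},\mathcal{E})$, $\mathcal{V}=\{1,\dots,n\}$, be a directed graph, where an edge $(i,j)$ means information flows from $i$ to $j$. Its weighted adjacency matrix $W=[w_{ij}]$ is row-stochastic with $w_{ij}>0$ iff $(j,i)\in\mathcal{E}$. In the Friedkin–Johnsen model, $\beta=\mathrm{diag}(\beta_1,\dots,\beta_n)$ with $\beta_i\in[0,1]$, and agent $i$ is stubborn if $\beta_i>0$. Here exactly two agents $s_1,s_2$ are stubborn, with $\beta_{s_1},\beta_{s_2}\in(0,1)$. The influence centrality vector is $\mathbf{c}=P^T\mathbb{1}_n/n$ with $P=(I_n-(I_n-\beta)W)^{-1}\beta$. Type $\mathcal{C}^1$: $\mathcal{G}$ is strongly connected and some node $m$ belongs to every cycle of $\mathcal{G}$ other than self-loops; such an $m$ is a global communicator. The stubborn agents are labelled using the level decomposition relative to $m$: the nodes are partitioned into disjoint sets $\mathcal{L}_0^m=\{m\},\mathcal{L}_1^m,\dots,\mathcal{L}_q^m$ such that every node $j\in\mathcal{L}_z^m$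 ($z\ge1$) has its in-neighbours (other than itself) only in $\{m\}\cup\mathcal{L}_1^m\cup\dots\cup\mathcal{L}_{z-1}^m$ and at least one in-neighbour in $\mathcal{L}_{z-1}^m$; $s_1\in\mathcal{L}_u^m$ and $s_2\in\mathcal{L}_v^m$ with $u\le v$. Edge modification $(a,b,d)$: for distinct nodes $a,b,d$ with $w_{bd}>0$ and some $0<w<w_{bd}$, replace $w_{ba}$ by $w_{ba}+w$ (adding edge $(a,b)$ if absent) and $w_{bd}$ by $w_{bd}-w$, so the row sum of $b$ is unchanged. *)

theory Defs
  imports "HOL-Analysis.Analysis"
begin

text \<open>Nodes are the elements of a finite type 'n. W $ i $ j is the weight w_ij;
  w_ij > 0 iff (j,i) is an edge, i.e. information flows from j to i.\<close>

definition edges :: "real^'n^'n \<Rightarrow> ('n \<times> 'n) set" where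
  "edges W = {(j, i). W $ i $ j > 0}"

definition row_stochastic :: "real^'n^'n \<Rightarrow> bool" where
  "row_stochastic W \<longleftrightarrow> (\<forall>i j. W $ i $ j \<ge> 0) \<and> (\<forall>i. (\<Sum>j\<in>UNIV. W $ i $ j) = 1)"

definition strongly_connected :: "real^'n^'n \<Rightarrow> bool" where
  "strongly_connected W \<longleftrightarrow> (\<forall>i j. (i, j) \<in> (edges W)\<^sup>*)"

definition is_cycle :: "real^'n^'n \<Rightarrow> 'n list \<Rightarrow> bool" where
  "is_cycle W cs \<longleftrightarrow> length cs \<ge> 2 \<and> distinct cs \<and>
     (\<forall>k < length cs. (cs ! k, cs ! ((k + 1) mod length cs)) \<in> edges W)"

definition global_communicator :: "real^'n^'n \<Rightarrow> 'n \<Rightarrow> bool" where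
  "global_communicator W m \<longleftrightarrow> (\<forall>cs. is_cycle W cs \<longrightarrow> m \<in> set cs)"

definition type_C1 :: "real^'n^'n \<Rightarrow> 'n \<Rightarrow> bool" where
  "type_C1 W m \<longleftrightarrow> strongly_connected W \<and> global_communicator W m"

text \<open>Level decomposition relative to m: lev j = z means j \<in> L_z^m.\<close>
definition level_decomp :: "real^'n^'n \<Rightarrow> 'n \<Rightarrow> ('n \<Rightarrow> nat) \<Rightarrow> bool" where
  "level_decomp W m lev \<longleftrightarrow> lev m = 0 \<and>
     (\<forall>j. j \<noteq> m \<longrightarrow> lev j \<ge> 1 \<and>
        (\<forall>k. k \<noteq> j \<and> W $ j $ k > 0 \<longrightarrow> lev k < lev j) \<and>
        (\<exists>k. W $ j $ k > 0 \<and> lev k = lev j - 1))"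

definition diag_mat :: "real^'n \<Rightarrow> real^'n^'n" where
  "diag_mat b = (\<chi> i j. if i = j then b $ i else 0)"

definition FJ_P :: "real^'n^'n \<Rightarrow> real^'n \<Rightarrow> real^'n^'n" where
  "FJ_P W b = matrix_inv (mat 1 - (mat 1 - diag_mat b) ** W) ** diag_mat b"

definition influence_centrality :: "real^'n^'n \<Rightarrow> real^'n \<Rightarrow> real^'n" where
  "influence_centrality W b = (\<chi> j. (\<Sum>i\<in>UNIV. FJ_P W b $ i $ j) / real CARD('n))"

definition edge_mod :: "real^'n^'n \<Rightarrow> 'n \<Rightarrow> 'n \<Rightarrow> 'n \<Rightarrow> real \<Rightarrow> real^'n^'n" where
  "edge_mod W a b d w = (\<chi> i j. if i = b \<and> j = a then W $ i $ j + w
                                else if i = b \<and> j = d then W $ i $ j - w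
                                else W $ i $ j)"

definition valid_edge_mod :: "real^'n^'n \<Rightarrow> 'n \<Rightarrow> 'n \<Rightarrow> 'n \<Rightarrow> real \<Rightarrow> bool" where
  "valid_edge_mod W a b d w \<longleftrightarrow> a \<noteq> b \<and> b \<noteq> d \<and> a \<noteq> d \<and> W $ b $ d > 0 \<and> 0 < w \<and> w < W $ b $ d"

end

theory Submission
  imports Defs
begin

lemma closed_all:
  assumes sc: "strongly_connected W" and iS: "i \<in> S"
    and cl: "\<And>i k. i \<in> S \<Longrightarrow> W $ i $ k > 0 \<Longrightarrow> k \<in> S"
  shows "y \<in> S"
proof -
  have "(y, i) \<in> (edges W)\<^sup>*" using sc unfolding strongly_connected_def by blast
  then show ?thesis
  proof (induction rule: converse_rtrancl_induct)
    case base then show ?case using iS .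
  next
    case (step y z)
    then show ?case using cl unfolding edges_def by blast
  qed
qed

lemma out_edge:
  assumes sc: "strongly_connected W" and "d \<noteq> b"
  shows "\<exists>y. y \<noteq> d \<and> W $ y $ d > 0"
proof (rule ccontr)
  assume H: "\<not> ?thesis"
  have "d \<in> UNIV - {d}"
    by (rule closed_all[OF sc, of b]) (use assms H in auto)
  then show False by simp
qed

lemma in_edge:
  assumes sc: "strongly_connected W" and "j \<noteq> d"
  shows "\<exists>u. u \<noteq> j \<and> W $ j $ u > 0"
proof (rule ccontr)
  assume H: "\<not> ?thesis"
  have "d \<in> {j}"
    by (rule closed_all[OF sc, of j]) (use assms H in auto)
  then show False using assms by simp
qed

lemma mp_nonneg:
  fixes W :: "real^'n^'n" and \<beta> x r :: "real^'n"
  assumes rs: "row_stochastic W" and sc: "strongly_connected W"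
    and bnd: "\<forall>i. 0 \<le> \<beta> $ i \<and> \<beta> $ i \<le> 1" and pos: "\<beta> $ i0 > 0"
    and eq: "\<forall>i. x $ i = (1 - \<beta> $ i) * (\<Sum>k\<in>UNIV. W $ i $ k * x $ k) + r $ i"
    and rn: "\<forall>i. r $ i \<ge> 0"
  shows "x $ j \<ge> 0"
proof (rule ccontr)
  assume neg: "\<not> x $ j \<ge> 0"
  define \<mu> where "\<mu> = Min (range (\<lambda>i. x $ i))"
  have fin: "finite (range (\<lambda>i. x $ i))" by simp
  have mule: "\<And>i. \<mu> \<le> x $ i" unfolding \<mu>_def using fin by (intro Min_le) auto
  have "\<mu> \<in> range (\<lambda>i. x $ i)" unfolding \<mu>_def using fin by (intro Min_in) auto
  then obtain i1 where i1: "x $ i1 = \<mu>" by auto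
  have mneg: "\<mu> < 0" using mule[of j] neg by simp
  define S where "S = {i. x $ i = \<mu>}"
  have key: "\<beta> $ i = 0 \<and> (\<forall>k. W $ i $ k > 0 \<longrightarrow> k \<in> S)" if iS: "i \<in> S" for i
  proof -
    have xi: "x $ i = \<mu>" using iS S_def by simp
    have wnn: "\<And>k. W $ i $ k \<ge> 0" using rs unfolding row_stochastic_def by blast
    have ws: "(\<Sum>k\<in>UNIV. W $ i $ k) = 1" using rs unfolding row_stochastic_def by blast
    have s1: "(\<Sum>k\<in>UNIV. W $ i $ k * x $ k) \<ge> (\<Sum>k\<in>UNIV. W $ i $ k * \<mu>)"
      by (intro sum_mono mult_left_mono mule wnn)
    have s2: "(\<Sum>k\<in>UNIV. W $ i $ k * \<mu>) = \<mu>" using ws by (simp add: sum_distrib_right[symmetric])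
    have b1: "1 - \<beta> $ i \<ge> 0" using bnd by simp
    have "\<mu> \<ge> (1 - \<beta> $ i) * \<mu>"
    proof -
      have "\<mu> = (1 - \<beta> $ i) * (\<Sum>k\<in>UNIV. W $ i $ k * x $ k) + r $ i" using eq[rule_format, of i] xi by simp
      also have "\<dots> \<ge> (1 - \<beta> $ i) * \<mu>"
        using mult_left_mono[OF s1 b1] s2 rn[rule_format, of i] by simp
      finally show ?thesis .
    qed
    then have "\<beta> $ i * \<mu> \<ge> 0" by (simp add: algebra_simps)
    then have b0: "\<beta> $ i = 0"
    proof -
      assume h: "\<beta> $ i * \<mu> \<ge> 0"
      show ?thesis
      proof (rule ccontr)
        assume "\<beta> $ i \<noteq> 0"
        then have "\<beta> $ i > 0" using bnd[rule_format, of i] by simp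
        then have "\<beta> $ i * \<mu> < 0" using mneg by (simp add: mult_pos_neg)
        then show False using h by simp
      qed
    qed
    have "\<mu> = (\<Sum>k\<in>UNIV. W $ i $ k * x $ k) + r $ i" using eq[rule_format, of i] xi b0 by simp
    then have "(\<Sum>k\<in>UNIV. W $ i $ k * (x $ k - \<mu>)) = - r $ i"
      using s2 by (simp add: algebra_simps sum_subtractf)
    moreover have "\<And>k. W $ i $ k * (x $ k - \<mu>) \<ge> 0" using wnn mule by simp
    ultimately have z: "(\<Sum>k\<in>UNIV. W $ i $ k * (x $ k - \<mu>)) = 0"
      using rn[rule_format, of i] sum_nonneg[of UNIV "\<lambda>k. W $ i $ k * (x $ k - \<mu>)"] by simp
    have "\<forall>k\<in>UNIV. W $ i $ k * (x $ k - \<mu>) = 0"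
      using sum_nonneg_eq_0_iff[of UNIV "\<lambda>k. W $ i $ k * (x $ k - \<mu>)"] z \<open>\<And>k. W $ i $ k * (x $ k - \<mu>) \<ge> 0\<close>
      by simp
    then have "\<forall>k. W $ i $ k > 0 \<longrightarrow> x $ k = \<mu>" by (simp, metis less_irrefl)
    then show ?thesis using b0 S_def by auto
  qed
  have "i0 \<in> S"
    by (rule closed_all[OF sc, of i1]) (use i1 S_def key in auto)
  then show False using key pos by simp
qed

lemma mp_pos:
  fixes W :: "real^'n^'n" and \<beta> x r :: "real^'n"
  assumes rs: "row_stochastic W" and sc: "strongly_connected W"
    and bnd: "\<forall>i. 0 \<le> \<beta> $ i \<and> \<beta> $ i < 1" and pos: "\<beta> $ i0 > 0"
    and eq: "\<forall>i. x $ i = (1 - \<beta> $ i) * (\<Sum>k\<in>UNIV. W $ i $ k * x $ k) + r $ i"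
    and rn: "\<forall>i. r $ i \<ge> 0" and rp: "r $ j0 > 0"
  shows "x $ j > 0"
proof (rule ccontr)
  assume neg: "\<not> x $ j > 0"
  have nn: "\<And>i. x $ i \<ge> 0"
    using mp_nonneg[OF rs sc _ pos eq rn] bnd by (meson less_imp_le)
  define S where "S = {i. x $ i = 0}"
  have jS: "j \<in> S" using neg nn[of j] S_def by simp
  have key: "r $ i = 0 \<and> (\<forall>k. W $ i $ k > 0 \<longrightarrow> k \<in> S)" if iS: "i \<in> S" for i
  proof -
    have xi: "x $ i = 0" using iS S_def by simp
    have wnn: "\<And>k. W $ i $ k \<ge> 0" using rs unfolding row_stochastic_def by blast
    have tnn: "\<And>k. W $ i $ k * x $ k \<ge> 0" using wnn nn by simp
    have sn: "(\<Sum>k\<in>UNIV. W $ i $ k * x $ k) \<ge> 0" using tnn by (simp add: sum_nonneg)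
    have b1: "1 - \<beta> $ i > 0" using bnd by (simp add: spec[OF bnd, of i])
    have e: "0 = (1 - \<beta> $ i) * (\<Sum>k\<in>UNIV. W $ i $ k * x $ k) + r $ i" using eq[rule_format, of i] xi by simp
    have p1: "(1 - \<beta> $ i) * (\<Sum>k\<in>UNIV. W $ i $ k * x $ k) \<ge> 0" using b1 sn by simp
    have r0: "r $ i = 0" using e p1 rn[rule_format, of i] by linarith
    have "(\<Sum>k\<in>UNIV. W $ i $ k * x $ k) = 0" using e r0 b1 by simp
    then have "\<forall>k\<in>UNIV. W $ i $ k * x $ k = 0"
      using sum_nonneg_eq_0_iff[of UNIV "\<lambda>k. W $ i $ k * x $ k"] tnn by simp
    then have "\<forall>k. W $ i $ k > 0 \<longrightarrow> x $ k = 0" by (simp, metis less_irrefl)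
    then show ?thesis using r0 S_def by auto
  qed
  have "j0 \<in> S"
    by (rule closed_all[OF sc, of j]) (use jS key in auto)
  then show False using key rp by simp
qed

lemma A_entry:
  fixes W :: "real^'n^'n" and b :: "real^'n"
  shows "(mat 1 - (mat 1 - diag_mat b) ** W) $ i $ k = (if i = k then 1 else 0) - (1 - b $ i) * W $ i $ k"
proof -
  have "((mat 1 - diag_mat b) ** W) $ i $ k = (\<Sum>j\<in>UNIV. (if i = j then 1 - b $ i else 0) * W $ j $ k)"
    unfolding matrix_matrix_mult_def diag_mat_def mat_def by (auto intro!: sum.cong)
  also have "\<dots> = (\<Sum>j\<in>UNIV. if i = j then (1 - b $ i) * W $ j $ k else 0)"
    by (intro sum.cong) auto
  also have "\<dots> = (1 - b $ i) * W $ i $ k"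
    by simp
  finally show ?thesis by (simp add: mat_def)
qed

lemma A_mulv:
  fixes W :: "real^'n^'n" and b x :: "real^'n"
  shows "((mat 1 - (mat 1 - diag_mat b) ** W) *v x) $ i = x $ i - (1 - b $ i) * (\<Sum>k\<in>UNIV. W $ i $ k * x $ k)"
proof -
  have "((mat 1 - (mat 1 - diag_mat b) ** W) *v x) $ i
      = (\<Sum>k\<in>UNIV. (if i = k then x $ k else 0) - (1 - b $ i) * (W $ i $ k * x $ k))"
    unfolding matrix_vector_mult_def A_entry by (auto simp: algebra_simps intro!: sum.cong)
  also have "\<dots> = x $ i - (1 - b $ i) * (\<Sum>k\<in>UNIV. W $ i $ k * x $ k)"
    by (simp add: sum_subtractf sum_distrib_left)
  finally show ?thesis .
qed

lemma A_invertible: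
  fixes W :: "real^'n^'n" and \<beta> :: "real^'n"
  assumes rs: "row_stochastic W" and sc: "strongly_connected W"
    and bnd: "\<forall>i. 0 \<le> \<beta> $ i \<and> \<beta> $ i \<le> 1" and pos: "\<beta> $ i0 > 0"
  shows "invertible (mat 1 - (mat 1 - diag_mat \<beta>) ** W)"
proof -
  have "\<forall>x. (mat 1 - (mat 1 - diag_mat \<beta>) ** W) *v x = 0 \<longrightarrow> x = 0"
  proof (intro allI impI)
    fix x :: "real^'n"
    assume h: "(mat 1 - (mat 1 - diag_mat \<beta>) ** W) *v x = 0"
    have e1: "\<forall>i. x $ i = (1 - \<beta> $ i) * (\<Sum>k\<in>UNIV. W $ i $ k * x $ k) + (0::real^'n) $ i"
    proof
      fix i
      have "((mat 1 - (mat 1 - diag_mat \<beta>) ** W) *v x) $ i = 0" by (simp only: h zero_index)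
      then have "x $ i - (1 - \<beta> $ i) * (\<Sum>k\<in>UNIV. W $ i $ k * x $ k) = 0"
        by (simp only: A_mulv)
      then show "x $ i = (1 - \<beta> $ i) * (\<Sum>k\<in>UNIV. W $ i $ k * x $ k) + (0::real^'n) $ i"
        by simp
    qed
    have e2: "\<forall>i. (-x) $ i = (1 - \<beta> $ i) * (\<Sum>k\<in>UNIV. W $ i $ k * (-x) $ k) + (0::real^'n) $ i"
    proof
      fix i
      have s: "(\<Sum>k\<in>UNIV. W $ i $ k * (-x) $ k) = - (\<Sum>k\<in>UNIV. W $ i $ k * x $ k)"
        by (simp add: sum_negf)
      have h1: "x $ i = (1 - \<beta> $ i) * (\<Sum>k\<in>UNIV. W $ i $ k * x $ k)"
        using e1[rule_format, of i] by simp
      show "(-x) $ i = (1 - \<beta> $ i) * (\<Sum>k\<in>UNIV. W $ i $ k * (-x) $ k) + (0::real^'n) $ i"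
        unfolding s by (simp add: h1)
    qed
    have p1: "\<And>j. x $ j \<ge> 0" using mp_nonneg[OF rs sc bnd pos e1] by simp
    have p2: "\<And>j. (-x) $ j \<ge> 0" using mp_nonneg[OF rs sc bnd pos e2] by simp
    show "x = 0"
      unfolding vec_eq_iff
    proof
      fix j show "x $ j = 0 $ j" using p1[of j] p2[of j] by simp
    qed
  qed
  then have "\<exists>B. B ** (mat 1 - (mat 1 - diag_mat \<beta>) ** W) = mat 1"
    using matrix_left_invertible_ker by blast
  then show ?thesis using invertible_left_inverse by blast
qed

lemma FJ_eq:
  fixes W :: "real^'n^'n" and \<beta> :: "real^'n"
  assumes rs: "row_stochastic W" and sc: "strongly_connected W"
    and bnd: "\<forall>i. 0 \<le> \<beta> $ i \<and> \<beta> $ i \<le> 1" and pos: "\<beta> $ i0 > 0"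
  shows "FJ_P W \<beta> $ i $ s = (1 - \<beta> $ i) * (\<Sum>k\<in>UNIV. W $ i $ k * FJ_P W \<beta> $ k $ s) + (if i = s then \<beta> $ s else 0)"
proof -
  let ?A = "mat 1 - (mat 1 - diag_mat \<beta>) ** W"
  have inv: "invertible ?A" by (rule A_invertible[OF rs sc bnd pos])
  have "?A ** matrix_inv ?A = mat 1"
    using inv unfolding invertible_def matrix_inv_def by (rule someI_ex[THEN conjunct1])
  then have "?A ** FJ_P W \<beta> = diag_mat \<beta>"
    unfolding FJ_P_def by (simp add: matrix_mul_assoc)
  then have "(?A ** FJ_P W \<beta>) $ i $ s = diag_mat \<beta> $ i $ s" by simp
  moreover have "(?A ** FJ_P W \<beta>) $ i $ s = (?A *v (\<chi> k. FJ_P W \<beta> $ k $ s)) $ i"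
    by (simp add: matrix_matrix_mult_def matrix_vector_mult_def)
  ultimately have "(?A *v (\<chi> k. FJ_P W \<beta> $ k $ s)) $ i = diag_mat \<beta> $ i $ s" by simp
  then have "FJ_P W \<beta> $ i $ s - (1 - \<beta> $ i) * (\<Sum>k\<in>UNIV. W $ i $ k * FJ_P W \<beta> $ k $ s) = diag_mat \<beta> $ i $ s"
    by (simp only: A_mulv vec_lambda_beta)
  then show ?thesis by (auto simp: diag_mat_def)
qed

lemma exists_pair:
  fixes W :: "real^'n^'n" and \<beta> h :: "real^'n"
  assumes rs: "row_stochastic W" and sc: "strongly_connected W"
    and card: "CARD('n) \<ge> 3" and ts: "t \<noteq> s"
    and b0: "\<forall>i. i \<noteq> s \<and> i \<noteq> t \<longrightarrow> \<beta> $ i = 0"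
    and bs: "\<beta> $ s > 0" "\<beta> $ s \<le> 1" and Wss: "W $ s $ s = 0"
    and heq: "\<forall>i. h $ i = (1 - \<beta> $ i) * (\<Sum>k\<in>UNIV. W $ i $ k * h $ k) + (if i = s then \<beta> $ s else 0)"
    and hlt: "\<forall>i. h $ i < 1"
  shows "\<exists>a b d. a \<noteq> b \<and> b \<noteq> d \<and> a \<noteq> d \<and> W $ b $ d > 0 \<and> h $ a > h $ d"
proof (rule ccontr)
  assume "\<not> ?thesis"
  then have H: "\<And>a b d. a \<noteq> b \<Longrightarrow> b \<noteq> d \<Longrightarrow> a \<noteq> d \<Longrightarrow> W $ b $ d > 0 \<Longrightarrow> h $ a \<le> h $ d"
    by (meson not_le)
  have wnn: "\<And>i k. W $ i $ k \<ge> 0" using rs unfolding row_stochastic_def by blast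
  have ws: "\<And>i. (\<Sum>k\<in>UNIV. W $ i $ k) = 1" using rs unfolding row_stochastic_def by blast
  have hs_gt: "h $ s > h $ a" if as: "a \<noteq> s" for a
  proof -
    have tm: "W $ s $ k * h $ a \<le> W $ s $ k * h $ k" for k
    proof (cases "W $ s $ k > 0")
      case True
      then have ks: "k \<noteq> s" using Wss by auto
      show ?thesis
      proof (cases "k = a")
        case True then show ?thesis by simp
      next
        case False
        then have "h $ a \<le> h $ k" using H[of a s k] as ks True by auto
        then show ?thesis using wnn[of s k] by (simp add: mult_left_mono)
      qed
    next
      case False
      then have "W $ s $ k = 0" using wnn[of s k] by simp
      then show ?thesis by simp
    qed
    have "(\<Sum>k\<in>UNIV. W $ s $ k * h $ a) \<le> (\<Sum>k\<in>UNIV. W $ s $ k * h $ k)"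
      by (rule sum_mono) (rule tm)
    moreover have "(\<Sum>k\<in>UNIV. W $ s $ k * h $ a) = h $ a"
      using ws[of s] by (simp add: sum_distrib_right[symmetric])
    ultimately have S: "h $ a \<le> (\<Sum>k\<in>UNIV. W $ s $ k * h $ k)" by simp
    have e: "h $ s = (1 - \<beta> $ s) * (\<Sum>k\<in>UNIV. W $ s $ k * h $ k) + \<beta> $ s"
      using heq[rule_format, of s] by simp
    have "(1 - \<beta> $ s) * h $ a \<le> (1 - \<beta> $ s) * (\<Sum>k\<in>UNIV. W $ s $ k * h $ k)"
      using S bs by (simp add: mult_left_mono)
    moreover have "\<beta> $ s * (1 - h $ a) > 0" using bs hlt[rule_format, of a] by simp
    ultimately show ?thesis using e by (simp add: algebra_simps)
  qed
  have noedge: "W $ b $ d = 0" if "d \<noteq> s" "b \<noteq> d" "b \<noteq> s" for b d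
  proof (rule ccontr)
    assume "W $ b $ d \<noteq> 0"
    then have "W $ b $ d > 0" using wnn[of b d] by simp
    then have "h $ s \<le> h $ d" using H[of s b d] that by auto
    then show False using hs_gt[of d] that by simp
  qed
  obtain j where j: "j \<noteq> s" "j \<noteq> t"
  proof -
    have "\<not> (UNIV \<subseteq> {s, t})"
    proof
      assume "UNIV \<subseteq> {s, t}"
      then have "CARD('n) \<le> card {s, t}" by (simp add: card_mono)
      also have "\<dots> \<le> 2" by (simp add: card_insert_le_m1)
      finally show False using card by simp
    qed
    then show ?thesis using that by blast
  qed
  have bj: "\<beta> $ j = 0" using b0 j by blast
  have Wjk: "W $ j $ k = 0" if "k \<noteq> s" "k \<noteq> j" for k
    using noedge[of k j] that j by auto
  have sum1: "(\<Sum>k\<in>UNIV. W $ j $ k * h $ k) = W $ j $ s * h $ s + W $ j $ j * h $ j"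
  proof -
    have "(\<Sum>k\<in>UNIV. W $ j $ k * h $ k)
        = (\<Sum>k\<in>UNIV. (if k = s then W $ j $ s * h $ s else 0) + (if k = j then W $ j $ j * h $ j else 0))"
      by (intro sum.cong refl) (use Wjk j in auto)
    also have "\<dots> = W $ j $ s * h $ s + W $ j $ j * h $ j" by (simp add: sum.distrib)
    finally show ?thesis .
  qed
  have sum2: "W $ j $ s + W $ j $ j = 1"
  proof -
    have "(\<Sum>k\<in>UNIV. W $ j $ k)
        = (\<Sum>k\<in>UNIV. (if k = s then W $ j $ s else 0) + (if k = j then W $ j $ j else 0))"
      by (intro sum.cong refl) (use Wjk j in auto)
    also have "\<dots> = W $ j $ s + W $ j $ j" by (simp add: sum.distrib)
    finally show ?thesis using ws[of j] by simp
  qed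
  obtain u where u: "u \<noteq> j" "W $ j $ u > 0" using in_edge[OF sc, of j s] j by auto
  have "u = s" using Wjk[of u] u by force
  then have Wjs: "W $ j $ s > 0" using u by simp
  have "h $ j = W $ j $ s * h $ s + W $ j $ j * h $ j"
    using heq[rule_format, of j] bj j sum1 by simp
  moreover have "W $ j $ j = 1 - W $ j $ s" using sum2 by simp
  ultimately have e: "h $ j = W $ j $ s * h $ s + (1 - W $ j $ s) * h $ j" by simp
  have "(1 - W $ j $ s) * h $ j = h $ j - W $ j $ s * h $ j" by (simp add: left_diff_distrib)
  moreover have "W $ j $ s * (h $ s - h $ j) = W $ j $ s * h $ s - W $ j $ s * h $ j"
    by (simp add: right_diff_distrib)
  ultimately have "W $ j $ s * (h $ s - h $ j) = 0" using e by linarith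
  then have "h $ s = h $ j" using Wjs by simp
  then show False using hs_gt[of j] j by simp
qed

lemma edge_mod_entry:
  assumes "a \<noteq> d"
  shows "edge_mod W a b d w $ i $ k = W $ i $ k + (if i = b then (if k = a then w else 0) - (if k = d then w else 0) else 0)"
  using assms unfolding edge_mod_def by auto

lemma improve:
  fixes W :: "real^'n^'n" and \<beta> :: "real^'n"
  assumes rs: "row_stochastic W" and sc: "strongly_connected W"
    and bnd: "\<forall>i. 0 \<le> \<beta> $ i \<and> \<beta> $ i < 1" and pos: "\<beta> $ i0 > 0"
    and ab: "a \<noteq> b" and bd: "b \<noteq> d" and ad: "a \<noteq> d"
    and w: "0 < w" "w < W $ b $ d"
    and hgt: "FJ_P W \<beta> $ a $ s > FJ_P W \<beta> $ d $ s"
  shows "influence_centrality (edge_mod W a b d w) \<beta> $ s > influence_centrality W \<beta> $ s"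
proof -
  define W' where "W' = edge_mod W a b d w"
  have E: "W' $ i $ k = W $ i $ k + (if i = b then (if k = a then w else 0) - (if k = d then w else 0) else 0)" for i k
    unfolding W'_def by (rule edge_mod_entry[OF ad])
  have wnn: "\<And>i k. W $ i $ k \<ge> 0" using rs unfolding row_stochastic_def by blast
  have ws: "\<And>i. (\<Sum>k\<in>UNIV. W $ i $ k) = 1" using rs unfolding row_stochastic_def by blast
  have mono: "W' $ i $ k > 0" if "W $ i $ k > 0" for i k
    using that w ad unfolding E by auto
  have rs': "row_stochastic W'"
    unfolding row_stochastic_def
  proof (intro conjI allI)
    fix i k show "W' $ i $ k \<ge> 0"
      using wnn[of i k] w ad unfolding E by auto
  next
    fix i
    have "(\<Sum>k\<in>UNIV. W' $ i $ k) = (\<Sum>k\<in>UNIV. W $ i $ k) +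
        (\<Sum>k\<in>UNIV. (if i = b then (if k = a then w else 0) - (if k = d then w else 0) else 0))"
      unfolding E by (simp add: sum.distrib)
    also have "(\<Sum>k\<in>UNIV. (if i = b then (if k = a then w else 0) - (if k = d then w else 0) else 0)) = 0"
      by (cases "i = b") (simp_all add: sum_subtractf)
    finally show "(\<Sum>k\<in>UNIV. W' $ i $ k) = 1" using ws[of i] by simp
  qed
  have sc': "strongly_connected W'"
  proof -
    have "edges W \<subseteq> edges W'" unfolding edges_def using mono by auto
    then show ?thesis using sc unfolding strongly_connected_def by (meson rtrancl_mono subsetD)
  qed
  have bnd1: "\<forall>i. 0 \<le> \<beta> $ i \<and> \<beta> $ i \<le> 1" using bnd by (simp add: less_imp_le)
  define h where "h = (\<chi> i. FJ_P W \<beta> $ i $ s)"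
  define h' where "h' = (\<chi> i. FJ_P W' \<beta> $ i $ s)"
  have heq: "h $ i = (1 - \<beta> $ i) * (\<Sum>k\<in>UNIV. W $ i $ k * h $ k) + (if i = s then \<beta> $ s else 0)" for i
    unfolding h_def vec_lambda_beta by (rule FJ_eq[OF rs sc bnd1 pos])
  have heq': "h' $ i = (1 - \<beta> $ i) * (\<Sum>k\<in>UNIV. W' $ i $ k * h' $ k) + (if i = s then \<beta> $ s else 0)" for i
    unfolding h'_def vec_lambda_beta by (rule FJ_eq[OF rs' sc' bnd1 pos])
  define \<delta> where "\<delta> = (\<chi> i. h' $ i - h $ i)"
  define r where "r = (\<chi> i. (1 - \<beta> $ i) * (if i = b then w * (h $ a - h $ d) else 0))"
  have hgt': "h $ a > h $ d" using hgt unfolding h_def by simp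
  have rsum: "(\<Sum>k\<in>UNIV. (W' $ i $ k - W $ i $ k) * h $ k) = (if i = b then w * (h $ a - h $ d) else 0)" for i
  proof (cases "i = b")
    case True
    have "(\<Sum>k\<in>UNIV. (W' $ i $ k - W $ i $ k) * h $ k)
        = (\<Sum>k\<in>UNIV. (if k = a then w * h $ a else 0) - (if k = d then w * h $ d else 0))"
      by (intro sum.cong refl) (use True in \<open>auto simp: E\<close>)
    also have "\<dots> = w * (h $ a - h $ d)" by (simp add: sum_subtractf right_diff_distrib)
    finally show ?thesis using True by simp
  next
    case False
    then show ?thesis by (simp add: E)
  qed
  have deq: "\<forall>i. \<delta> $ i = (1 - \<beta> $ i) * (\<Sum>k\<in>UNIV. W' $ i $ k * \<delta> $ k) + r $ i"
  proof
    fix i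
    have split: "(\<Sum>k\<in>UNIV. W' $ i $ k * h' $ k) - (\<Sum>k\<in>UNIV. W $ i $ k * h $ k)
        = (\<Sum>k\<in>UNIV. W' $ i $ k * \<delta> $ k) + (\<Sum>k\<in>UNIV. (W' $ i $ k - W $ i $ k) * h $ k)"
    proof -
      have "(\<Sum>k\<in>UNIV. W' $ i $ k * h' $ k) - (\<Sum>k\<in>UNIV. W $ i $ k * h $ k)
          = (\<Sum>k\<in>UNIV. W' $ i $ k * h' $ k - W $ i $ k * h $ k)" by (simp add: sum_subtractf)
      also have "\<dots> = (\<Sum>k\<in>UNIV. W' $ i $ k * \<delta> $ k + (W' $ i $ k - W $ i $ k) * h $ k)"
        by (intro sum.cong refl) (simp add: \<delta>_def algebra_simps)
      also have "\<dots> = (\<Sum>k\<in>UNIV. W' $ i $ k * \<delta> $ k) + (\<Sum>k\<in>UNIV. (W' $ i $ k - W $ i $ k) * h $ k)"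
        by (simp add: sum.distrib)
      finally show ?thesis .
    qed
    have "\<delta> $ i = h' $ i - h $ i" by (simp add: \<delta>_def)
    also have "\<dots> = (1 - \<beta> $ i) * ((\<Sum>k\<in>UNIV. W' $ i $ k * h' $ k) - (\<Sum>k\<in>UNIV. W $ i $ k * h $ k))"
      using heq[of i] heq'[of i] by (simp add: right_diff_distrib)
    also have "\<dots> = (1 - \<beta> $ i) * (\<Sum>k\<in>UNIV. W' $ i $ k * \<delta> $ k) + r $ i"
      unfolding split rsum r_def by (simp add: distrib_left)
    finally show "\<delta> $ i = (1 - \<beta> $ i) * (\<Sum>k\<in>UNIV. W' $ i $ k * \<delta> $ k) + r $ i" .
  qed
  have rn: "\<forall>i. r $ i \<ge> 0"
    using bnd hgt' w by (simp add: r_def less_imp_le)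
  have rp: "r $ b > 0"
    using bnd hgt' w by (simp add: r_def)
  have dpos: "\<delta> $ i > 0" for i
    by (rule mp_pos[OF rs' sc' bnd pos deq rn rp])
  have "(\<Sum>i\<in>UNIV. h $ i) < (\<Sum>i\<in>UNIV. h' $ i)"
    by (rule sum_strict_mono) (use dpos in \<open>auto simp: \<delta>_def\<close>)
  then have "(\<Sum>i\<in>UNIV. FJ_P W \<beta> $ i $ s) < (\<Sum>i\<in>UNIV. FJ_P W' \<beta> $ i $ s)"
    by (simp add: h_def h'_def)
  then show ?thesis
    unfolding influence_centrality_def W'_def[symmetric]
    by (simp add: divide_strict_right_mono)
qed

theorem theorem3:
  fixes W :: "real^'n^'n" and \<beta> :: "real^'n" and m s1 s2 :: 'n and lev :: "'n \<Rightarrow> nat"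
  assumes "CARD('n) \<ge> 3"
    and "row_stochastic W"
    and "type_C1 W m"
    and "level_decomp W m lev"
    and "\<forall>i. 0 \<le> \<beta> $ i \<and> \<beta> $ i \<le> 1"
    and "s1 \<noteq> s2"
    and "{i. \<beta> $ i > 0} = {s1, s2}"
    and "\<beta> $ s1 < 1" and "\<beta> $ s2 < 1"
    and "lev s1 \<le> lev s2"
    and "W $ s1 $ s1 = 0" and "W $ s2 $ s2 = 0"
    and "\<beta> $ s2 \<ge> 1 / 2"
    and "s \<in> {s1, s2}"
  shows "\<exists>a b d w. valid_edge_mod W a b d w \<and>
           influence_centrality (edge_mod W a b d w) \<beta> $ s > influence_centrality W \<beta> $ s"
proof -
  note card = assms(1) and rs = assms(2) and bnd1 = assms(5) and S = assms(7)
  have sc: "strongly_connected W" using assms(3) unfolding type_C1_def by blast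
  have pos_iff: "\<beta> $ i > 0 \<longleftrightarrow> i = s1 \<or> i = s2" for i
    using S by (metis (mono_tags, lifting) insert_iff mem_Collect_eq singletonD)
  have bnd: "\<forall>i. 0 \<le> \<beta> $ i \<and> \<beta> $ i < 1"
  proof
    fix i show "0 \<le> \<beta> $ i \<and> \<beta> $ i < 1"
      using bnd1[rule_format, of i] pos_iff[of i] assms(8,9) by (cases "\<beta> $ i > 0") auto
  qed
  obtain t where t: "t \<in> {s1, s2}" "t \<noteq> s" using assms(6,14) by auto
  have pos: "\<beta> $ s > 0" using pos_iff assms(14) by auto
  have post: "\<beta> $ t > 0" using pos_iff t by auto
  have Wss: "W $ s $ s = 0" using assms(11,12,14) by auto
  have b0: "\<forall>i. i \<noteq> s \<and> i \<noteq> t \<longrightarrow> \<beta> $ i = 0"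
  proof (intro allI impI)
    fix i assume "i \<noteq> s \<and> i \<noteq> t"
    then have "i \<noteq> s1 \<and> i \<noteq> s2" using t assms(6,14) by auto
    then show "\<beta> $ i = 0" using pos_iff[of i] bnd1[rule_format, of i] by auto
  qed
  have ws: "\<And>i. (\<Sum>k\<in>UNIV. W $ i $ k) = 1" using rs unfolding row_stochastic_def by blast
  define h where "h = (\<chi> i. FJ_P W \<beta> $ i $ s)"
  have heq1: "h $ i = (1 - \<beta> $ i) * (\<Sum>k\<in>UNIV. W $ i $ k * h $ k) + (if i = s then \<beta> $ s else 0)" for i
    unfolding h_def vec_lambda_beta by (rule FJ_eq[OF rs sc bnd1 pos])
  then have heq: "\<forall>i. h $ i = (1 - \<beta> $ i) * (\<Sum>k\<in>UNIV. W $ i $ k * h $ k) + (if i = s then \<beta> $ s else 0)"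
    by blast
  define g where "g = (\<chi> i. 1 - h $ i)"
  define r where "r = (\<chi> i. \<beta> $ i - (if i = s then \<beta> $ s else 0))"
  have geq: "\<forall>i. g $ i = (1 - \<beta> $ i) * (\<Sum>k\<in>UNIV. W $ i $ k * g $ k) + r $ i"
  proof
    fix i
    have "(\<Sum>k\<in>UNIV. W $ i $ k * g $ k) = (\<Sum>k\<in>UNIV. W $ i $ k - W $ i $ k * h $ k)"
      by (simp add: g_def right_diff_distrib)
    also have "\<dots> = 1 - (\<Sum>k\<in>UNIV. W $ i $ k * h $ k)" by (simp add: sum_subtractf ws)
    finally have sg: "(\<Sum>k\<in>UNIV. W $ i $ k * g $ k) = 1 - (\<Sum>k\<in>UNIV. W $ i $ k * h $ k)" .
    have "(1 - \<beta> $ i) * (1 - (\<Sum>k\<in>UNIV. W $ i $ k * h $ k))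
        = (1 - \<beta> $ i) - (1 - \<beta> $ i) * (\<Sum>k\<in>UNIV. W $ i $ k * h $ k)"
      by (simp add: right_diff_distrib)
    then show "g $ i = (1 - \<beta> $ i) * (\<Sum>k\<in>UNIV. W $ i $ k * g $ k) + r $ i"
      unfolding sg using heq1[of i] by (simp add: g_def r_def)
  qed
  have rn: "\<forall>i. r $ i \<ge> 0" using bnd1 by (simp add: r_def)
  have rp: "r $ t > 0" using post t by (simp add: r_def)
  have hlt: "\<forall>i. h $ i < 1"
  proof
    fix i
    have "g $ i > 0" by (rule mp_pos[OF rs sc bnd pos geq rn rp])
    then show "h $ i < 1" by (simp add: g_def)
  qed
  have bs1: "\<beta> $ s \<le> 1" using bnd1 by simp
  obtain a b d where abd: "a \<noteq> b" "b \<noteq> d" "a \<noteq> d" "W $ b $ d > 0" "h $ a > h $ d"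
    using exists_pair[OF rs sc card t(2) b0 pos bs1 Wss heq hlt] by (elim exE conjE)
  define w where "w = W $ b $ d / 2"
  have w: "0 < w" "w < W $ b $ d" using abd(4) by (simp_all add: w_def)
  have v: "valid_edge_mod W a b d w" unfolding valid_edge_mod_def using abd w by auto
  have "influence_centrality (edge_mod W a b d w) \<beta> $ s > influence_centrality W \<beta> $ s"
    by (rule improve[OF rs sc bnd pos abd(1,2,3) w]) (use abd(5) in \<open>simp add: h_def\<close>)
  then show ?thesis using v by blast
qed

end
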